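(* Let $(A,B,\mathfrak H)$ be a P-module and $X\in\{F,T,V,\mathcal O\}$. Then $\mathfrak H_{\mathrm{atom}}=\bigoplus_{[p]}\mathfrak H_{\mathrm{atom}}^{[p]}$ and $\Pi^X(\mathfrak H_{\mathrm{atom}})\cong\bigoplus_{[p]}\Pi^X(\mathfrak H_{\mathrm{atom}}^{[p]})$, where the direct sums run over all equivalence classes $[p]$ of periodic rays whose period has length at most $\dim(\mathfrak H_{\mathrm{atom}})$.
   Context: A P-module is $(A,B,\mathfrak H)$ with $\mathfrak H$ finite-dimensional complex Hilbert, $A^*A+B^*B=\mathrm{id}$. Sub-module: subspace invariant under $A,B$; irreducible: no sub-modules besides $\{0\}$ and itself. $\mathfrak H=\mathfrak H_{\mathrm{comp}}\oplus\mathfrak H_{\mathrm{res}}$ orthogonally, where $\mathfrak H_{\mathrm{comp}}$ is a direct sum of irreducible sub-modules and $\mathfrak H_{\mathrm{res}}$ contains no non-zero sub-module. Rays: infinite binary sequences $p=x_1x_2\cdots$; $p_n=x_1\cdots x_n$, ${}_np=x_{n+1}x_{n+2}\cdots$; $w\xi:=X_{x_n}\cdots X_{x_1}\xi$ for $w=x_1\cdots x_n$, $X_0=A,X_1=B$. Non-zero $\xi$ is contained in $p$ if $\|p_n\xi\|=\|\xi\|$ for all $n$. Periodic ray: $w^\infty$; its period length is the length of the shortest such $w$. $p\sim q$ if ${}_np={}_kq$ for some $n,k$; $[p]$ is the class. $\mathfrak H_{\mathrm{atom}}=\mathrm{span}\{\xi\in\mathfrak H_{\mathrm{comp}}:\xi\text{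 contained in a periodic ray}\}$ and, for periodic $p$, $\mathfrak H_{\mathrm{atom}}^{[p]}=\mathrm{span}\{\xi\in\mathfrak H_{\mathrm{atom}}:\xi\text{ contained in }{}_kp\text{ for some }k\}$ (a sub-module depending only on $[p]$). $\Pi^X(\mathfrak K)$: the Pythagorean representation of $X$ built from a sub-module $\mathfrak K$ with restricted operators: for finite rooted full binary trees $t$ with leaves $\ell_1<\dots<\ell_n$ put $\mathfrak K_t=\mathfrak K^n$; attaching a caret at a leaf $\ell$ replaces $\xi_\ell$ by $A\xi_\ell,B\xi_\ell$ at $\ell0,\ell1$; $\mathscr H$ is the completed inductive limit with classes $[t,\xi]$. $V$ consists of homeomorphisms $g$ of $\{0,1\}^{\mathbf N}$ with $g(u_i\cdot x)=v_{\kappa(i)}\cdot x$ for leaves $u_i$ of a tree $s$, $v_i$ of a tree $t$, permutation $\kappa$ ($F$: $\kappa$ trivial; $T$: $\kappa$ cyclic), acting by $g[s,\xi]=[t,\eta]$, $\eta_{v_{\kappa(i)}}=\xi_{u_i}$. The Cuntz algebra $\mathcal O$ acts by $s_i\mapsto\tau_i^*$, $\tau_i[t,\xi]=[t_i,\xi|_{t_i}]$ with $t_i$ the subtree rooted at vertex $i$. $\cong$ is unitary equivalence. *)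

theory Defs
  imports "HOL-Analysis.Analysis"
begin

type_synonym 'n cmat = "complex^'n^'n"
type_synonym 'n cvec = "complex^'n"

definition cinner :: "'n::finite cvec \<Rightarrow> 'n cvec \<Rightarrow> complex" where
  "cinner x y = (\<Sum>i\<in>UNIV. cnj (x$i) * y$i)"

definition cadj :: "'n::finite cmat \<Rightarrow> 'n cmat" where
  "cadj M = (\<chi> i j. cnj (M$j$i))"

definition pmodule :: "'n::finite cmat \<Rightarrow> 'n cmat \<Rightarrow> bool" where
  "pmodule A B \<longleftrightarrow> cadj A ** A + cadj B ** B = mat 1"

definition submodule :: "'n::finite cmat \<Rightarrow> 'n cmat \<Rightarrow> 'n cvec set \<Rightarrow> bool" where
  "submodule A B K \<longleftrightarrow> vec.subspace K \<and> (\<forall>x\<in>K. A *v x \<in> K \<and> B *v x \<in> K)"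

definition irreducible_sub :: "'n::finite cmat \<Rightarrow> 'n cmat \<Rightarrow> 'n cvec set \<Rightarrow> bool" where
  "irreducible_sub A B K \<longleftrightarrow> submodule A B K \<and> K \<noteq> {0} \<and>
     (\<forall>K'. submodule A B K' \<and> K' \<subseteq> K \<longrightarrow> K' = {0} \<or> K' = K)"

definition Hcomp :: "'n::finite cmat \<Rightarrow> 'n cmat \<Rightarrow> 'n cvec set" where
  "Hcomp A B = vec.span (\<Union>{K. irreducible_sub A B K})"

text \<open>w xi = X_{x_n} ... X_{x_1} xi for w = x_1...x_n, X_False = A, X_True = B.\<close>
fun wact :: "'n::finite cmat \<Rightarrow> 'n cmat \<Rightarrow> bool list \<Rightarrow> 'n cvec \<Rightarrow> 'n cvec" where
  "wact A B [] v = v"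
| "wact A B (x # w) v = wact A B w ((if x then B else A) *v v)"

type_synonym ray = "nat \<Rightarrow> bool"

definition rprefix :: "ray \<Rightarrow> nat \<Rightarrow> bool list" where
  "rprefix p n = map p [0..<n]"

definition rshift :: "nat \<Rightarrow> ray \<Rightarrow> ray" where
  "rshift n p = (\<lambda>i. p (i + n))"

definition contained :: "'n::finite cmat \<Rightarrow> 'n cmat \<Rightarrow> 'n cvec \<Rightarrow> ray \<Rightarrow> bool" where
  "contained A B \<xi> p \<longleftrightarrow> \<xi> \<noteq> 0 \<and> (\<forall>n. norm (wact A B (rprefix p n) \<xi>) = norm \<xi>)"

definition has_period_word :: "ray \<Rightarrow> bool list \<Rightarrow> bool" where
  "has_period_word p w \<longleftrightarrow> w \<noteq> [] \<and> (\<forall>i. p i = w ! (i mod length w))"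

definition periodic :: "ray \<Rightarrow> bool" where
  "periodic p \<longleftrightarrow> (\<exists>w. has_period_word p w)"

definition period_len :: "ray \<Rightarrow> nat" where
  "period_len p = (LEAST k. \<exists>w. has_period_word p w \<and> length w = k)"

definition ray_equiv :: "ray \<Rightarrow> ray \<Rightarrow> bool" where
  "ray_equiv p q \<longleftrightarrow> (\<exists>n k. rshift n p = rshift k q)"

definition ray_class :: "ray \<Rightarrow> ray set" where
  "ray_class p = {q. ray_equiv p q}"

definition Hatom :: "'n::finite cmat \<Rightarrow> 'n cmat \<Rightarrow> 'n cvec set" where
  "Hatom A B = vec.span {\<xi>\<in>Hcomp A B. \<exists>p. periodic p \<and> contained A B \<xi> p}"

definition Hatom_ray :: "'n::finite cmat \<Rightarrow> 'n cmat \<Rightarrow> ray \<Rightarrow> 'n cvec set" where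
  "Hatom_ray A B p = vec.span {\<xi>\<in>Hatom A B. \<exists>k. contained A B \<xi> (rshift k p)}"

text \<open>H_atom^[p] for a class c (via any periodic representative; it only depends on the class).\<close>
definition Hatom_class :: "'n::finite cmat \<Rightarrow> 'n cmat \<Rightarrow> ray set \<Rightarrow> 'n cvec set" where
  "Hatom_class A B c = Hatom_ray A B (SOME p. periodic p \<and> ray_class p = c)"

definition atom_classes :: "'n::finite cmat \<Rightarrow> 'n cmat \<Rightarrow> ray set set" where
  "atom_classes A B = {ray_class p | p. periodic p \<and> period_len p \<le> vec.dim (Hatom A B)}"

definition orth_dsum :: "'n::finite cvec set \<Rightarrow> 'i set \<Rightarrow> ('i \<Rightarrow> 'n cvec set) \<Rightarrow> bool" where
  "orth_dsum H I S \<longleftrightarrow>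
     (\<forall>i\<in>I. \<forall>j\<in>I. i \<noteq> j \<longrightarrow> (\<forall>x\<in>S i. \<forall>y\<in>S j. cinner x y = 0)) \<and>
     H = vec.span (\<Union>i\<in>I. S i)"

datatype tree = Lf | Nd tree tree

fun leaves :: "tree \<Rightarrow> bool list list" where
  "leaves Lf = [[]]"
| "leaves (Nd l r) = map (Cons False) (leaves l) @ map (Cons True) (leaves r)"

fun depth :: "tree \<Rightarrow> nat" where
  "depth Lf = 0"
| "depth (Nd l r) = Suc (max (depth l) (depth r))"

text \<open>An element [t_N, f] with t_N the complete binary tree of depth N; f gives the
  vector at the leaf w (length w = N). Every class [t, xi] has such a representative.\<close>
type_synonym 'n elt = "nat \<times> (bool list \<Rightarrow> 'n cvec)"

definition PiD :: "'n::finite cvec set \<Rightarrow> 'n elt set" where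
  "PiD K = {x. \<forall>w. length w = fst x \<longrightarrow> snd x w \<in> K}"

text \<open>Value at a word w with length w >= fst x after attaching carets.\<close>
definition expd :: "'n::finite cmat \<Rightarrow> 'n cmat \<Rightarrow> 'n elt \<Rightarrow> bool list \<Rightarrow> 'n cvec" where
  "expd A B x w = wact A B (drop (fst x) w) (snd x (take (fst x) w))"

definition pip :: "'n::finite cmat \<Rightarrow> 'n cmat \<Rightarrow> 'n elt \<Rightarrow> 'n elt \<Rightarrow> complex" where
  "pip A B x y = (let L = max (fst x) (fst y) in
     \<Sum>w\<in>{w. length w = L}. cinner (expd A B x w) (expd A B y w))"

text \<open>Action of the element of V given by tree pair (s,t) and permutation kappa:
  g[s,xi] = [t,eta], eta_{v_kappa(i)} = xi_{u_i}.\<close>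
definition gact :: "'n::finite cmat \<Rightarrow> 'n cmat \<Rightarrow> tree \<Rightarrow> tree \<Rightarrow> (nat \<Rightarrow> nat) \<Rightarrow> 'n elt \<Rightarrow> 'n elt" where
  "gact A B s t \<kappa> x = (let N' = max (fst x) (depth s); us = leaves s; vs = leaves t;
      M = N' + depth t in
     (M, \<lambda>w. let j = (THE j. j < length vs \<and> take (length (vs!j)) w = vs!j);
                 i = inv_into {..<length us} \<kappa> j;
                 z = drop (length (vs!j)) w;
                 L = N' - length (us!i)
             in wact A B (drop L z) (expd A B x (us!i @ take L z))))"

definition sstar :: "bool \<Rightarrow> 'n::finite elt \<Rightarrow> 'n elt" where
  "sstar b x = (Suc (fst x), \<lambda>w. if w \<noteq> [] \<and> hd w = b then snd x (tl w) else 0)"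

datatype gen = GElt tree tree "nat \<Rightarrow> nat" | CGen bool

datatype kind = KF | KT | KV | KO

definition gens :: "kind \<Rightarrow> gen set" where
  "gens X = (case X of
     KF \<Rightarrow> {GElt s t \<kappa> | s t \<kappa>. length (leaves s) = length (leaves t) \<and> (\<forall>i. \<kappa> i = i)}
   | KT \<Rightarrow> {GElt s t \<kappa> | s t \<kappa>. length (leaves s) = length (leaves t) \<and>
             \<kappa> permutes {..<length (leaves s)} \<and>
             (\<exists>k. \<forall>i<length (leaves s). \<kappa> i = (i + k) mod length (leaves s))}
   | KV \<Rightarrow> {GElt s t \<kappa> | s t \<kappa>. length (leaves s) = length (leaves t) \<and>
             \<kappa> permutes {..<length (leaves s)}}
   | KO \<Rightarrow> range CGen)"

definition pop :: "'n::finite cmat \<Rightarrow> 'n cmat \<Rightarrow> gen \<Rightarrow> 'n elt \<Rightarrow> 'n elt" where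
  "pop A B \<gamma> x = (case \<gamma> of GElt s t \<kappa> \<Rightarrow> gact A B s t \<kappa> x | CGen b \<Rightarrow> sstar b x)"

text \<open>A pre-Hilbert space is a carrier D with a (semi-)inner product ip; its completion
  consists of Cauchy sequences modulo null sequences. Operators act termwise.\<close>

definition dsq :: "('d \<Rightarrow> 'd \<Rightarrow> complex) \<Rightarrow> 'd \<Rightarrow> 'd \<Rightarrow> complex" where
  "dsq ip x y = ip x x - ip x y - ip y x + ip y y"

definition cauchy_in :: "'d set \<Rightarrow> ('d \<Rightarrow> 'd \<Rightarrow> complex) \<Rightarrow> (nat \<Rightarrow> 'd) \<Rightarrow> bool" where
  "cauchy_in D ip X \<longleftrightarrow> (\<forall>k. X k \<in> D) \<and>
     (\<forall>e>0. \<exists>M. \<forall>m\<ge>M. \<forall>n\<ge>M. cmod (dsq ip (X m) (X n)) < e)"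

definition ceq :: "('d \<Rightarrow> 'd \<Rightarrow> complex) \<Rightarrow> (nat \<Rightarrow> 'd) \<Rightarrow> (nat \<Rightarrow> 'd) \<Rightarrow> bool" where
  "ceq ip X Y \<longleftrightarrow> (\<lambda>k. dsq ip (X k) (Y k)) \<longlonglongrightarrow> 0"

definition cip :: "('d \<Rightarrow> 'd \<Rightarrow> complex) \<Rightarrow> (nat \<Rightarrow> 'd) \<Rightarrow> (nat \<Rightarrow> 'd) \<Rightarrow> complex" where
  "cip ip X Y = lim (\<lambda>k. ip (X k) (Y k))"

definition unit_equiv ::
  "'g set \<Rightarrow> 'd set \<Rightarrow> ('d \<Rightarrow> 'd \<Rightarrow> complex) \<Rightarrow> ('g \<Rightarrow> 'd \<Rightarrow> 'd)
          \<Rightarrow> 'e set \<Rightarrow> ('e \<Rightarrow> 'e \<Rightarrow> complex) \<Rightarrow> ('g \<Rightarrow> 'e \<Rightarrow> 'e) \<Rightarrow> bool" where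
  "unit_equiv G D1 ip1 op1 D2 ip2 op2 \<longleftrightarrow> (\<exists>U.
     (\<forall>X. cauchy_in D1 ip1 X \<longrightarrow> cauchy_in D2 ip2 (U X)) \<and>
     (\<forall>X Y. cauchy_in D1 ip1 X \<longrightarrow> cauchy_in D1 ip1 Y \<longrightarrow> cip ip2 (U X) (U Y) = cip ip1 X Y) \<and>
     (\<forall>Y. cauchy_in D2 ip2 Y \<longrightarrow> (\<exists>X. cauchy_in D1 ip1 X \<and> ceq ip2 (U X) Y)) \<and>
     (\<forall>g\<in>G. \<forall>X. cauchy_in D1 ip1 X \<longrightarrow>
         ceq ip2 (U (\<lambda>k. op1 g (X k))) (\<lambda>k. op2 g (U X k))))"

text \<open>Pi^X(K) as pre-Hilbert data, and finite orthogonal direct sums of such.\<close>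
definition Pi_equiv_sum :: "'n::finite cmat \<Rightarrow> 'n cmat \<Rightarrow> kind \<Rightarrow> 'n cvec set
     \<Rightarrow> 'i set \<Rightarrow> ('i \<Rightarrow> 'n cvec set) \<Rightarrow> bool" where
  "Pi_equiv_sum A B X K I S \<longleftrightarrow>
     unit_equiv (gens X) (PiD K) (pip A B) (pop A B)
       {x. \<forall>i\<in>I. x i \<in> PiD (S i)} (\<lambda>x y. \<Sum>i\<in>I. pip A B (x i) (y i)) (\<lambda>\<gamma> x i. pop A B \<gamma> (x i))"

end

theory Submission
  imports Defs
begin



lemma cinner_add_right: "cinner x (y + z) = cinner x y + cinner x z"
  by (simp add: cinner_def sum.distrib distrib_left)
lemma cinner_add_left: "cinner (x + y) z = cinner x z + cinner y z"
  by (simp add: cinner_def sum.distrib distrib_right)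
lemma cinner_diff_right: "cinner x (y - z) = cinner x y - cinner x z"
  by (simp add: cinner_def sum_subtractf right_diff_distrib)
lemma cinner_diff_left: "cinner (x - y) z = cinner x z - cinner y z"
  by (simp add: cinner_def sum_subtractf left_diff_distrib)
lemma cinner_scale_right: "cinner x (c *s y) = c * cinner x y"
  by (simp add: cinner_def sum_distrib_left mult.left_commute)
lemma cinner_scale_left: "cinner (c *s x) y = cnj c * cinner x y"
  by (simp add: cinner_def sum_distrib_left mult.assoc)
lemma cinner_zero_left[simp]: "cinner 0 y = 0" by (simp add: cinner_def)
lemma cinner_zero_right[simp]: "cinner x 0 = 0" by (simp add: cinner_def)
lemma cinner_sum_right: "cinner x (sum f S) = (\<Sum>i\<in>S. cinner x (f i))"
  by (induction S rule: infinite_finite_induct) (auto simp: cinner_add_right)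
lemma cinner_sum_left: "cinner (sum f S) y = (\<Sum>i\<in>S. cinner (f i) y)"
  by (induction S rule: infinite_finite_induct) (auto simp: cinner_add_left)

lemma cinner_adj: "cinner (M *v x) y = cinner x (cadj M *v y)"
proof -
  have "cinner (M *v x) y = (\<Sum>i\<in>UNIV. \<Sum>j\<in>UNIV. cnj (M$i$j) * cnj (x$j) * y$i)"
    by (simp add: cinner_def matrix_vector_mult_def sum_distrib_right)
  also have "\<dots> = (\<Sum>j\<in>UNIV. \<Sum>i\<in>UNIV. cnj (M$i$j) * cnj (x$j) * y$i)"
    by (rule sum.swap)
  also have "\<dots> = cinner x (cadj M *v y)"
    by (simp add: cinner_def matrix_vector_mult_def cadj_def sum_distrib_left mult_ac)
  finally show ?thesis .
qed

lemma cinner_self: "cinner x x = of_real ((norm x)^2)"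
proof -
  have "(norm x)^2 = (\<Sum>i\<in>UNIV. (cmod (x$i))^2)"
    by (simp add: norm_vec_def L2_set_def sum_nonneg)
  then show ?thesis
    by (simp add: cinner_def complex_norm_square[symmetric] mult.commute)
qed

lemma cinner_self_eq0: "cinner x x = 0 \<longleftrightarrow> x = 0"
  by (simp add: cinner_self)

lemma pmod_inner:
  assumes "pmodule A B"
  shows "cinner x y = cinner (A *v x) (A *v y) + cinner (B *v x) (B *v y)"
proof -
  have "cinner (A *v x) (A *v y) + cinner (B *v x) (B *v y)
     = cinner x ((cadj A ** A) *v y) + cinner x ((cadj B ** B) *v y)"
    by (simp add: cinner_adj matrix_vector_mul_assoc)
  also have "\<dots> = cinner x ((cadj A ** A + cadj B ** B) *v y)"
    by (simp add: cinner_add_right matrix_vector_mult_add_rdistrib)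
  also have "\<dots> = cinner x y" using assms by (simp add: pmodule_def)
  finally show ?thesis by simp
qed

lemma pmod_norm:
  assumes "pmodule A B"
  shows "(norm x)^2 = (norm (A *v x))^2 + (norm (B *v x))^2"
proof -
  have "complex_of_real ((norm x)^2) = of_real ((norm (A *v x))^2 + (norm (B *v x))^2)"
    using pmod_inner[OF assms, of x x] by (simp add: cinner_self)
  then show ?thesis using of_real_eq_iff by blast
qed




abbreviation sel :: "'n::finite cmat \<Rightarrow> 'n cmat \<Rightarrow> bool \<Rightarrow> 'n cmat" where
  "sel A B b \<equiv> (if b then B else A)"

lemma wact_append: "wact A B (u @ v) x = wact A B v (wact A B u x)"
  by (induction u arbitrary: x) auto

lemma wact_snoc: "wact A B (u @ [b]) x = sel A B b *v wact A B u x"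
  by (simp add: wact_append)

lemma rprefix_Suc: "rprefix p (Suc n) = rprefix p n @ [p n]"
  by (simp add: rprefix_def)

lemma rprefix_Suc': "rprefix p (Suc n) = p 0 # rprefix (rshift 1 p) n"
  by (simp add: rprefix_def rshift_def map_upt_Suc del: upt_Suc)

lemma rshift_rshift: "rshift a (rshift b p) = rshift (a + b) p"
  by (simp add: rshift_def add.assoc)

lemma rshift_0[simp]: "rshift 0 p = p" by (simp add: rshift_def)

lemma rprefix_1: "rprefix p 1 = [p 0]" by (simp add: rprefix_def)

lemma cont_step:
  assumes pm: "pmodule A B" and c: "contained A B \<xi> p"
  shows "sel A B (\<not> p 0) *v \<xi> = 0" and "contained A B (sel A B (p 0) *v \<xi>) (rshift 1 p)"
proof -
  have n1: "norm (sel A B (p 0) *v \<xi>) = norm \<xi>"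
    using c unfolding contained_def by (metis rprefix_1 wact.simps)
  have "(norm \<xi>)^2 = (norm (A *v \<xi>))^2 + (norm (B *v \<xi>))^2" by (rule pmod_norm[OF pm])
  then have "(norm (sel A B (\<not> p 0) *v \<xi>))^2 = 0" using n1 by (cases "p 0") auto
  then show "sel A B (\<not> p 0) *v \<xi> = 0" by simp
  show "contained A B (sel A B (p 0) *v \<xi>) (rshift 1 p)"
    unfolding contained_def
  proof
    show "sel A B (p 0) *v \<xi> \<noteq> 0" using n1 c by (auto simp: contained_def)
    show "\<forall>n. norm (wact A B (rprefix (rshift 1 p) n) (sel A B (p 0) *v \<xi>)) = norm (sel A B (p 0) *v \<xi>)"
    proof
      fix n
      have "norm (wact A B (rprefix p (Suc n)) \<xi>) = norm \<xi>" using c by (simp add: contained_def)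
      then show "norm (wact A B (rprefix (rshift 1 p) n) (sel A B (p 0) *v \<xi>)) = norm (sel A B (p 0) *v \<xi>)"
        using n1 by (simp add: rprefix_Suc')
    qed
  qed
qed

lemma cont_iter:
  assumes pm: "pmodule A B" and c: "contained A B \<xi> p"
  shows "contained A B (wact A B (rprefix p m) \<xi>) (rshift m p)"
proof (induction m)
  case 0 then show ?case using c by (simp add: rprefix_def)
next
  case (Suc m)
  have "contained A B (sel A B (rshift m p 0) *v wact A B (rprefix p m) \<xi>) (rshift 1 (rshift m p))"
    by (rule cont_step(2)[OF pm Suc])
  then show ?case by (cases "p m") (simp_all add: rprefix_Suc wact_snoc rshift_rshift rshift_def)
qed

lemma cont_orth_n:
  assumes pm: "pmodule A B"
  shows "contained A B \<xi> p \<Longrightarrow> contained A B \<eta> q \<Longrightarrow> p n \<noteq> q n \<Longrightarrow> cinner \<xi> \<eta> = 0"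
proof (induction n arbitrary: \<xi> \<eta> p q)
  case 0
  have e: "cinner \<xi> \<eta> = cinner (A *v \<xi>) (A *v \<eta>) + cinner (B *v \<xi>) (B *v \<eta>)"
    by (rule pmod_inner[OF pm])
  show ?case using cont_step(1)[OF pm "0.prems"(1)] cont_step(1)[OF pm "0.prems"(2)] "0.prems"(3) e
    by (cases "p 0") auto
next
  case (Suc n)
  have e: "cinner \<xi> \<eta> = cinner (A *v \<xi>) (A *v \<eta>) + cinner (B *v \<xi>) (B *v \<eta>)"
    by (rule pmod_inner[OF pm])
  show ?case
  proof (cases "p 0 = q 0")
    case False
    then show ?thesis using cont_step(1)[OF pm Suc.prems(1)] cont_step(1)[OF pm Suc.prems(2)] e
      by (cases "p 0") auto
  next
    case True
    have ih: "cinner (sel A B (p 0) *v \<xi>) (sel A B (q 0) *v \<eta>) = 0"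
      apply (rule Suc.IH[OF cont_step(2)[OF pm Suc.prems(1)] cont_step(2)[OF pm Suc.prems(2)]])
      using Suc.prems(3) by (simp add: rshift_def)
    then show ?thesis using cont_step(1)[OF pm Suc.prems(1)] cont_step(1)[OF pm Suc.prems(2)] e True
      by (cases "p 0") auto
  qed
qed

lemma cont_orth:
  assumes pm: "pmodule A B" and "contained A B \<xi> p" "contained A B \<eta> q" "p \<noteq> q"
  shows "cinner \<xi> \<eta> = 0"
proof -
  obtain n where "p n \<noteq> q n" using assms(4) by auto
  then show ?thesis using cont_orth_n[OF pm assms(2,3)] by blast
qed

definition invs :: "'n::finite cmat \<Rightarrow> 'n cmat \<Rightarrow> 'n cvec set \<Rightarrow> bool" where
  "invs A B S \<longleftrightarrow> (\<forall>x\<in>S. A *v x \<in> S \<and> B *v x \<in> S)"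

lemma span_inv:
  assumes "\<And>x. x \<in> G \<Longrightarrow> A *v x \<in> vec.span G \<and> B *v x \<in> vec.span G"
  shows "invs A B (vec.span G)"
  unfolding invs_def
proof
  fix x assume "x \<in> vec.span G"
  then show "A *v x \<in> vec.span G \<and> B *v x \<in> vec.span G"
  proof (induction rule: vec.span_induct_alt)
    case base then show ?case by (simp add: vec.span_zero)
  next
    case (step c x y)
    then show ?case using assms[OF step(1)]
      by (simp add: vec.add vec.scale vec.span_add vec.span_scale)
  qed
qed

lemma wact_inv: "invs A B S \<Longrightarrow> x \<in> S \<Longrightarrow> wact A B w x \<in> S"
  by (induction w arbitrary: x) (auto simp: invs_def)

lemma periodic_iff: "periodic p \<longleftrightarrow> (\<exists>L>0. \<forall>i. p (i + L) = p i)"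
proof
  assume "periodic p"
  then obtain w where w: "has_period_word p w" unfolding periodic_def by blast
  then have "length w > 0" "\<forall>i. p (i + length w) = p i" by (auto simp: has_period_word_def)
  then show "\<exists>L>0. \<forall>i. p (i + L) = p i" by blast
next
  assume "\<exists>L>0. \<forall>i. p (i + L) = p i"
  then obtain L where L: "L > 0" "\<And>i. p (i + L) = p i" by blast
  have k: "p (i + k * L) = p i" for i k
  proof (induction k)
    case (Suc k) then show ?case using L(2)[of "i + k*L"] by (simp add: add_ac)
  qed simp
  have "has_period_word p (map p [0..<L])"
    unfolding has_period_word_def using L(1)
    by (auto simp: k[of "i mod L" "i div L" for i, symmetric])
  then show "periodic p" unfolding periodic_def by blast
qed

lemma periodic_mult:
  fixes p :: "nat \<Rightarrow> 'a" and L k :: nat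
  assumes "\<And>i. p (i + L) = p i" shows "p (i + k * L) = p i"
proof (induction k)
  case (Suc k) then show ?case using assms[of "i + k*L"] by (simp add: add_ac)
qed simp

lemma periodic_rshift: "periodic p \<Longrightarrow> periodic (rshift m p)"
  unfolding periodic_iff rshift_def by (metis add.commute add.left_commute)

lemma period_len_ex:
  assumes "periodic p"
  obtains w where "has_period_word p w" "length w = period_len p"
proof -
  have "\<exists>k w. has_period_word p w \<and> length w = k" using assms unfolding periodic_def by blast
  from LeastI_ex[OF this] show ?thesis using that unfolding period_len_def by blast
qed

lemma period_len_le:
  assumes "d > 0" "\<And>i. p (i + d) = p i" shows "period_len p \<le> d"
proof -
  have "has_period_word p (map p [0..<d])"
    unfolding has_period_word_def using assms(1)
    by (auto simp: periodic_mult[of p d, OF assms(2), of "i mod d" "i div d" for i, symmetric])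
  then show ?thesis unfolding period_len_def by (intro Least_le) auto
qed

lemma period_len_pos: "periodic p \<Longrightarrow> period_len p > 0"
  by (metis gr0I has_period_word_def length_0_conv period_len_ex)

lemma period_len_periodic: "periodic p \<Longrightarrow> p (i + period_len p) = p i"
  by (metis has_period_word_def mod_add_self2 period_len_ex)

lemma ray_equiv_refl: "ray_equiv p p" unfolding ray_equiv_def by blast
lemma ray_equiv_sym: "ray_equiv p q \<Longrightarrow> ray_equiv q p" unfolding ray_equiv_def by metis
lemma ray_equiv_trans: "ray_equiv p q \<Longrightarrow> ray_equiv q r \<Longrightarrow> ray_equiv p r"
  unfolding ray_equiv_def by (metis rshift_rshift add.commute)

lemma ray_class_eq: "ray_class p = ray_class q \<longleftrightarrow> ray_equiv p q"
  unfolding ray_class_def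
  by (auto intro: ray_equiv_refl ray_equiv_trans ray_equiv_sym)

lemma periodic_equiv_shift:
  assumes "periodic p" "ray_equiv p q"
  shows "\<exists>j. p = rshift j q"
proof -
  obtain n k where nk: "rshift n p = rshift k q" using assms(2) unfolding ray_equiv_def by blast
  let ?L = "period_len p"
  have L: "?L > 0" "\<And>i. p (i + ?L) = p i"
    using period_len_pos period_len_periodic assms(1) by auto
  have ge: "n * ?L \<ge> n" using L(1) by simp
  have "p i = q (i + (n * ?L - n) + k)" for i
  proof -
    have "p i = p (i + n * ?L)" using periodic_mult[of p ?L, OF L(2)] by simp
    also have "\<dots> = p ((i + (n * ?L - n)) + n)"
    proof -
      have e: "(i + (n * ?L - n)) + n = i + n * ?L" using ge by linarith
      show ?thesis by (simp only: e)
    qed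
    also have "\<dots> = rshift n p (i + (n * ?L - n))" by (simp add: rshift_def)
    also have "\<dots> = q (i + (n * ?L - n) + k)" using fun_cong[OF nk, of "i + (n*?L - n)"] by (simp add: rshift_def)
    finally show ?thesis .
  qed
  then have "p = rshift (n * ?L - n + k) q" by (auto simp: rshift_def add.assoc)
  then show ?thesis by blast
qed




lemma span_orth:
  assumes "\<And>x y. x \<in> G1 \<Longrightarrow> y \<in> G2 \<Longrightarrow> cinner x y = 0"
    and "x \<in> vec.span G1" "y \<in> vec.span G2"
  shows "cinner x y = 0"
proof -
  have h: "\<forall>y\<in>vec.span G2. cinner x y = 0" if x: "x \<in> G1" for x
  proof
    fix y assume "y \<in> vec.span G2"
    then show "cinner x y = 0"
      by (induction rule: vec.span_induct_alt)
        (auto simp: cinner_add_right cinner_scale_right assms(1)[OF x])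
  qed
  from assms(2) have "\<forall>y\<in>vec.span G2. cinner x y = 0"
    by (induction rule: vec.span_induct_alt)
      (auto simp: cinner_add_left cinner_scale_left h)
  then show ?thesis using assms(3) by blast
qed

lemma span_sub_subspace: "G \<subseteq> vec.span H \<Longrightarrow> vec.span G \<subseteq> vec.span H"
  by (simp add: vec.span_minimal)

context
  fixes A B :: "complex^'n::finite^'n"
  assumes pm: "pmodule A B"
begin

lemma Hcomp_inv: "invs A B (Hcomp A B)"
  unfolding Hcomp_def
proof (rule span_inv)
  fix x assume "x \<in> \<Union>{K. irreducible_sub A B K}"
  then obtain K where "irreducible_sub A B K" "x \<in> K" by blast
  then have "A *v x \<in> K" "B *v x \<in> K" by (auto simp: irreducible_sub_def submodule_def)
  then show "A *v x \<in> vec.span (\<Union>{K. irreducible_sub A B K}) \<and> B *v x \<in> vec.span (\<Union>{K. irreducible_sub A B K})"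
    using \<open>irreducible_sub A B K\<close> by (auto intro!: vec.span_base)
qed

lemma step_or:
  assumes "contained A B \<xi> p"
  shows "sel A B b *v \<xi> = 0 \<or> contained A B (sel A B b *v \<xi>) (rshift 1 p)"
  using cont_step[OF pm assms] by (cases "b = p 0") (auto split: if_splits)

lemma Hatom_inv: "invs A B (Hatom A B)"
  unfolding Hatom_def
proof (rule span_inv)
  fix x assume "x \<in> {\<xi> \<in> Hcomp A B. \<exists>p. periodic p \<and> contained A B \<xi> p}"
  then obtain p where x: "x \<in> Hcomp A B" "periodic p" "contained A B x p" by blast
  have h: "sel A B b *v x \<in> vec.span {\<xi> \<in> Hcomp A B. \<exists>p. periodic p \<and> contained A B \<xi> p}" for b
  proof -
    have "sel A B b *v x \<in> Hcomp A B" using Hcomp_inv x(1) by (auto simp: invs_def)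
    moreover have "periodic (rshift 1 p)" using periodic_rshift[OF x(2)] .
    moreover note step_or[OF x(3), of b]
    ultimately show ?thesis
    proof (elim disjE)
      assume "sel A B b *v x = 0" then show ?thesis by (simp add: vec.span_zero)
    next
      assume "sel A B b *v x \<in> Hcomp A B" "periodic (rshift 1 p)" "contained A B (sel A B b *v x) (rshift 1 p)"
      then show ?thesis by (intro vec.span_base) blast
    qed
  qed
  show "A *v x \<in> vec.span {\<xi> \<in> Hcomp A B. \<exists>p. periodic p \<and> contained A B \<xi> p} \<and>
        B *v x \<in> vec.span {\<xi> \<in> Hcomp A B. \<exists>p. periodic p \<and> contained A B \<xi> p}"
    using h[of False] h[of True] by simp
qed

lemma Hatom_ray_inv: "invs A B (Hatom_ray A B p)"
  unfolding Hatom_ray_def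
proof (rule span_inv)
  fix x assume "x \<in> {\<xi> \<in> Hatom A B. \<exists>k. contained A B \<xi> (rshift k p)}"
  then obtain k where x: "x \<in> Hatom A B" "contained A B x (rshift k p)" by blast
  have h: "sel A B b *v x \<in> vec.span {\<xi> \<in> Hatom A B. \<exists>k. contained A B \<xi> (rshift k p)}" for b
  proof -
    have "sel A B b *v x \<in> Hatom A B" using Hatom_inv x(1) by (auto simp: invs_def)
    moreover note step_or[OF x(2), of b]
    ultimately show ?thesis
    proof (elim disjE)
      assume "sel A B b *v x = 0" then show ?thesis by (simp add: vec.span_zero)
    next
      assume "sel A B b *v x \<in> Hatom A B" "contained A B (sel A B b *v x) (rshift 1 (rshift k p))"
      then show ?thesis by (intro vec.span_base) (auto simp: rshift_rshift)
    qed
  qed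
  show "A *v x \<in> vec.span {\<xi> \<in> Hatom A B. \<exists>k. contained A B \<xi> (rshift k p)} \<and>
        B *v x \<in> vec.span {\<xi> \<in> Hatom A B. \<exists>k. contained A B \<xi> (rshift k p)}"
    using h[of False] h[of True] by simp
qed

lemma Hatom_ray_sub: "Hatom_ray A B p \<subseteq> Hatom A B"
  unfolding Hatom_ray_def Hatom_def
  by (rule vec.span_minimal) (auto intro: vec.span_base)

lemma Hatom_ray_orth:
  assumes "\<not> ray_equiv p q" "x \<in> Hatom_ray A B p" "y \<in> Hatom_ray A B q"
  shows "cinner x y = 0"
  using assms(2,3) unfolding Hatom_ray_def
proof (rule span_orth[rotated])
  fix x y
  assume "x \<in> {\<xi> \<in> Hatom A B. \<exists>k. contained A B \<xi> (rshift k p)}"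
     "y \<in> {\<xi> \<in> Hatom A B. \<exists>k. contained A B \<xi> (rshift k q)}"
  then obtain k l where "contained A B x (rshift k p)" "contained A B y (rshift l q)" by blast
  moreover have "rshift k p \<noteq> rshift l q" using assms(1) unfolding ray_equiv_def by blast
  ultimately show "cinner x y = 0" by (rule cont_orth[OF pm])
qed

lemma period_bound:
  assumes x: "\<xi> \<in> Hcomp A B" "periodic q" "contained A B \<xi> q"
  shows "period_len q \<le> vec.dim (Hatom A B)"
proof -
  define L where "L = period_len q"
  have L: "L > 0" "\<And>i. q (i + L) = q i"
    using period_len_pos period_len_periodic x(2) unfolding L_def by auto
  define f where "f m = wact A B (rprefix q m) \<xi>" for m
  have cf: "contained A B (f m) (rshift m q)" for m
    unfolding f_def by (rule cont_iter[OF pm x(3)])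
  have fH: "f m \<in> Hatom A B" for m
  proof -
    have "f m \<in> Hcomp A B" unfolding f_def by (rule wact_inv[OF Hcomp_inv x(1)])
    then show ?thesis unfolding Hatom_def
      using cf[of m] periodic_rshift[OF x(2)] by (auto intro!: vec.span_base)
  qed
  have dist: "rshift m q \<noteq> rshift m' q" if "m < m'" "m' < L" for m m'
  proof
    assume eq: "rshift m q = rshift m' q"
    define d where "d = m' - m"
    have d: "d > 0" "d < L" using that unfolding d_def by auto
    have "q (i + d) = q i" for i
    proof -
      have ge: "m * L \<ge> m" using L(1) by simp
      have "q i = q (i + m * L)" using periodic_mult[of q L, OF L(2)] by simp
      also have "i + m * L = (i + m * L - m) + m" using ge by linarith
      also have "q \<dots> = q ((i + m * L - m) + m')" using fun_cong[OF eq, of "i + m * L - m"]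
        by (simp add: rshift_def)
      also have "(i + m * L - m) + m' = (i + d) + m * L" using ge that unfolding d_def by linarith
      also have "q \<dots> = q (i + d)" using periodic_mult[of q L, OF L(2)] by simp
      finally show ?thesis by simp
    qed
    then have "period_len q \<le> d" using period_len_le d(1) by blast
    then show False using d(2) unfolding L_def by simp
  qed
  have orth: "cinner (f m) (f m') = 0" if "m < L" "m' < L" "m \<noteq> m'" for m m'
  proof (cases "m < m'")
    case True then show ?thesis using cont_orth[OF pm cf cf dist] that by blast
  next
    case False
    then have "rshift m q \<noteq> rshift m' q" using dist[of m' m] that by auto
    then show ?thesis using cont_orth[OF pm cf cf] by blast
  qed
  have nz: "f m \<noteq> 0" for m using cf[of m] by (simp add: contained_def)
  have inj: "inj_on f {..<L}"
  proof (rule inj_onI)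
    fix m m' assume "m \<in> {..<L}" "m' \<in> {..<L}" "f m = f m'"
    then show "m = m'" using orth[of m m'] nz[of m] cinner_self_eq0[of "f m"] by auto
  qed
  define V where "V = f ` {..<L}"
  have finV: "finite V" unfolding V_def by simp
  have orthV: "cinner v v' = 0" if "v \<in> V" "v' \<in> V" "v \<noteq> v'" for v v'
    using that orth unfolding V_def by auto
  have indep: "vec.independent V"
  proof
    assume "vec.dependent V"
    then obtain u v0 where u: "v0 \<in> V" "u v0 \<noteq> 0" "(\<Sum>v\<in>V. u v *s v) = 0"
      using vec.dependent_finite[OF finV] by blast
    have "0 = cinner v0 (\<Sum>v\<in>V. u v *s v)" using u(3) by simp
    also have "\<dots> = (\<Sum>v\<in>V. u v * cinner v0 v)" by (simp add: cinner_sum_right cinner_scale_right)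
    also have "\<dots> = u v0 * cinner v0 v0"
      using orthV[OF u(1)] u(1) finV by (subst sum.remove[of _ v0]) (auto intro!: sum.neutral, metis)
    finally have "u v0 * cinner v0 v0 = 0" by simp
    moreover have "v0 \<noteq> 0" using u(1) nz unfolding V_def by auto
    ultimately show False using u(2) cinner_self_eq0 by auto
  qed
  have "card V \<le> vec.dim (Hatom A B)"
    by (rule vec.independent_card_le_dim[OF _ indep]) (auto simp: V_def fH)
  moreover have "card V = L" unfolding V_def using inj by (simp add: card_image)
  ultimately show ?thesis unfolding L_def by simp
qed

end

lemma finite_atom_classes: "finite (atom_classes A B)"
proof -
  let ?g = "\<lambda>w::bool list. ray_class (\<lambda>i. w ! (i mod length w))"
  have "atom_classes A B \<subseteq> ?g ` {w. set w \<subseteq> UNIV \<and> length w \<le> vec.dim (Hatom A B)}"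
  proof
    fix c assume "c \<in> atom_classes A B"
    then obtain p where p: "c = ray_class p" "periodic p" "period_len p \<le> vec.dim (Hatom A B)"
      unfolding atom_classes_def by blast
    obtain w where w: "has_period_word p w" "length w = period_len p"
      using period_len_ex[OF p(2)] by blast
    have "p = (\<lambda>i. w ! (i mod length w))" using w(1) by (auto simp: has_period_word_def)
    then show "c \<in> ?g ` {w. set w \<subseteq> UNIV \<and> length w \<le> vec.dim (Hatom A B)}"
      using p w by (intro image_eqI[of _ _ w]) auto
  qed
  moreover have "finite {w::bool list. set w \<subseteq> UNIV \<and> length w \<le> vec.dim (Hatom A B)}"
    by (rule finite_lists_length_le) simp
  ultimately show ?thesis by (meson finite_surj)
qed




lemma rep_class:
  assumes "c \<in> atom_classes A B"
  shows "periodic (SOME p. periodic p \<and> ray_class p = c) \<and> ray_class (SOME p. periodic p \<and> ray_class p = c) = c"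
proof -
  obtain p where "c = ray_class p" "periodic p" using assms unfolding atom_classes_def by blast
  then have "\<exists>p. periodic p \<and> ray_class p = c" by blast
  from someI_ex[OF this] show ?thesis .
qed
lemma Hatom_class_orth:
  assumes pm: "pmodule A B" and "c \<in> atom_classes A B" "c' \<in> atom_classes A B" "c \<noteq> c'"
    "x \<in> Hatom_class A B c" "y \<in> Hatom_class A B c'"
  shows "cinner x y = 0"
proof -
  let ?p = "SOME p. periodic p \<and> ray_class p = c"
  let ?q = "SOME p. periodic p \<and> ray_class p = c'"
  have "\<not> ray_equiv ?p ?q" using rep_class[OF assms(2)] rep_class[OF assms(3)] assms(4)
    by (simp add: ray_class_eq[symmetric])
  then show ?thesis using Hatom_ray_orth[OF pm] assms(5,6) unfolding Hatom_class_def by blast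
qed

lemma Hatom_span:
  assumes pm: "pmodule A B"
  shows "Hatom A B = vec.span (\<Union>c\<in>atom_classes A B. Hatom_class A B c)"
proof
  show "vec.span (\<Union>c\<in>atom_classes A B. Hatom_class A B c) \<subseteq> Hatom A B"
  proof (rule vec.span_minimal)
    show "vec.subspace (Hatom A B)" unfolding Hatom_def by (rule vec.subspace_span)
    show "(\<Union>c\<in>atom_classes A B. Hatom_class A B c) \<subseteq> Hatom A B"
      unfolding Hatom_class_def using Hatom_ray_sub[OF pm] by blast
  qed
next
  show "Hatom A B \<subseteq> vec.span (\<Union>c\<in>atom_classes A B. Hatom_class A B c)"
    unfolding Hatom_def[of A B]
  proof (rule vec.span_mono, rule subsetI)
    fix \<xi> assume "\<xi> \<in> {\<xi> \<in> Hcomp A B. \<exists>p. periodic p \<and> contained A B \<xi> p}"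
    then obtain q where q: "\<xi> \<in> Hcomp A B" "periodic q" "contained A B \<xi> q" by blast
    define c where "c = ray_class q"
    have cI: "c \<in> atom_classes A B"
      unfolding atom_classes_def c_def using q period_bound[OF pm q] by blast
    let ?p = "SOME p. periodic p \<and> ray_class p = c"
    have "ray_equiv q ?p" using rep_class[OF cI] unfolding c_def by (simp add: ray_class_eq[symmetric])
    then obtain j where j: "q = rshift j ?p" using periodic_equiv_shift[OF q(2)] by blast
    have "\<xi> \<in> Hatom A B" unfolding Hatom_def using q by (intro vec.span_base) blast
    moreover have "contained A B \<xi> (rshift j ?p)" using q(3) j by simp
    ultimately have "\<xi> \<in> Hatom_class A B c"
      unfolding Hatom_class_def Hatom_ray_def by (intro vec.span_base) blast
    then show "\<xi> \<in> (\<Union>c\<in>atom_classes A B. Hatom_class A B c)" using cI by blast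
  qed
qed

lemma part1:
  assumes pm: "pmodule A B"
  shows "orth_dsum (Hatom A B) (atom_classes A B) (Hatom_class A B)"
  unfolding orth_dsum_def
proof (intro conjI ballI impI)
  show "Hatom A B = vec.span (\<Union>c\<in>atom_classes A B. Hatom_class A B c)" by (rule Hatom_span[OF pm])
next
  fix i j x y assume "i \<in> atom_classes A B" "j \<in> atom_classes A B" "i \<noteq> j"
    "x \<in> Hatom_class A B i" "y \<in> Hatom_class A B j"
  then show "cinner x y = 0" by (rule Hatom_class_orth[OF pm])
qed




lemma take_cons_eq: "take (length (c # u)) w = c # u \<longleftrightarrow> (\<exists>w'. w = c # w' \<and> take (length u) w' = u)"
  by (cases w) auto

lemma leaves_len: "v \<in> set (leaves t) \<Longrightarrow> length v \<le> depth t"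
  by (induction t arbitrary: v) fastforce+

lemma leaves_ex: "depth t \<le> length w \<Longrightarrow> \<exists>v \<in> set (leaves t). take (length v) w = v"
proof (induction t arbitrary: w)
  case Lf then show ?case by simp
next
  case (Nd l r)
  then obtain a w' where w: "w = a # w'" by (cases w) auto
  show ?case
  proof (cases a)
    case True
    obtain v where "v \<in> set (leaves r)" "take (length v) w' = v" using Nd.IH(2)[of w'] Nd.prems w by auto
    then show ?thesis using w True by (intro bexI[of _ "True # v"]) auto
  next
    case False
    obtain v where "v \<in> set (leaves l)" "take (length v) w' = v" using Nd.IH(1)[of w'] Nd.prems w by auto
    then show ?thesis using w False by (intro bexI[of _ "False # v"]) auto
  qed
qed

lemma leaves_uniq: "v1 \<in> set (leaves t) \<Longrightarrow> v2 \<in> set (leaves t) \<Longrightarrow> take (length v1) w = v1 \<Longrightarrow> take (length v2) w = v2 \<Longrightarrow> v1 = v2"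
proof (induction t arbitrary: v1 v2 w)
  case Lf then show ?case by simp
next
  case (Nd l r)
  from Nd.prems(1) obtain c1 u1 where v1: "v1 = c1 # u1" "(c1 = False \<and> u1 \<in> set (leaves l)) \<or> (c1 = True \<and> u1 \<in> set (leaves r))" by auto
  from Nd.prems(2) obtain c2 u2 where v2: "v2 = c2 # u2" "(c2 = False \<and> u2 \<in> set (leaves l)) \<or> (c2 = True \<and> u2 \<in> set (leaves r))" by auto
  obtain w' where w1: "w = c1 # w'" "take (length u1) w' = u1" using Nd.prems(3) v1(1) take_cons_eq by metis
  obtain w'' where w2: "w = c2 # w''" "take (length u2) w'' = u2" using Nd.prems(4) v2(1) take_cons_eq by metis
  have "c1 = c2" "w' = w''" using w1 w2 by auto
  then show ?case using Nd.IH v1 v2 w1 w2 by auto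
qed

lemma leaves_distinct: "distinct (leaves t)"
  by (induction t) (auto simp: distinct_map)

lemma THE_leaf:
  assumes "depth t \<le> length w"
  defines "j \<equiv> THE j. j < length (leaves t) \<and> take (length (leaves t ! j)) w = leaves t ! j"
  shows "j < length (leaves t) \<and> take (length (leaves t ! j)) w = leaves t ! j \<and> length (leaves t ! j) \<le> depth t"
proof -
  have ex1: "\<exists>!j. j < length (leaves t) \<and> take (length (leaves t ! j)) w = leaves t ! j"
  proof -
    obtain v where v: "v \<in> set (leaves t)" "take (length v) w = v" using leaves_ex[OF assms(1)] by blast
    then obtain j0 where j0: "j0 < length (leaves t)" "leaves t ! j0 = v" by (auto simp: in_set_conv_nth)
    show ?thesis
    proof (rule ex1I[of _ j0])
      show "j0 < length (leaves t) \<and> take (length (leaves t ! j0)) w = leaves t ! j0" using j0 v by simp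
    next
      fix j assume j: "j < length (leaves t) \<and> take (length (leaves t ! j)) w = leaves t ! j"
      then have "leaves t ! j = leaves t ! j0"
        using leaves_uniq[of "leaves t ! j" t "leaves t ! j0" w] j0 v by auto
      then show "j = j0" using j j0 leaves_distinct[of t] nth_eq_iff_index_eq by blast
    qed
  qed
  from theI'[OF ex1] have "j < length (leaves t) \<and> take (length (leaves t ! j)) w = leaves t ! j"
    unfolding j_def .
  then show ?thesis using leaves_len by auto
qed

lemma finite_words: "finite {w::bool list. length w = L}"
  using finite_lists_length_eq[of "UNIV::bool set" L] by simp

lemma expd_snoc:
  assumes "fst x \<le> length w"
  shows "expd A B x (w @ [b]) = sel A B b *v expd A B x w"
  using assms by (simp add: expd_def wact_snoc)

definition SL :: "'n::finite cmat \<Rightarrow> 'n cmat \<Rightarrow> 'n elt \<Rightarrow> 'n elt \<Rightarrow> nat \<Rightarrow> complex" where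
  "SL A B x y L = (\<Sum>w\<in>{w. length w = L}. cinner (expd A B x w) (expd A B y w))"

lemma words_Suc: "{w::bool list. length w = Suc L} = (\<lambda>(w, b). w @ [b]) ` ({w. length w = L} \<times> UNIV)"
proof
  show "{w::bool list. length w = Suc L} \<subseteq> (\<lambda>(w, b). w @ [b]) ` ({w. length w = L} \<times> UNIV)"
  proof
    fix w :: "bool list" assume "w \<in> {w. length w = Suc L}"
    then have "w \<noteq> []" "length (butlast w) = L" by auto
    then show "w \<in> (\<lambda>(w, b). w @ [b]) ` ({w. length w = L} \<times> UNIV)"
      by (intro image_eqI[of _ _ "(butlast w, last w)"]) auto
  qed
qed auto

lemma SL_Suc:
  assumes pm: "pmodule A B" and "fst x \<le> L" "fst y \<le> L"
  shows "SL A B x y (Suc L) = SL A B x y L"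
proof -
  have inj: "inj_on (\<lambda>(w, b). w @ [b]) ({w::bool list. length w = L} \<times> UNIV)"
    by (auto simp: inj_on_def)
  have "SL A B x y (Suc L) = (\<Sum>(w, b)\<in>{w. length w = L} \<times> UNIV. cinner (expd A B x (w @ [b])) (expd A B y (w @ [b])))"
    unfolding SL_def words_Suc by (subst sum.reindex[OF inj]) (simp add: case_prod_unfold)
  also have "\<dots> = (\<Sum>w\<in>{w. length w = L}. \<Sum>b\<in>UNIV. cinner (expd A B x (w @ [b])) (expd A B y (w @ [b])))"
    by (rule sum.cartesian_product[symmetric])
  also have "\<dots> = (\<Sum>w\<in>{w. length w = L}. cinner (expd A B x w) (expd A B y w))"
  proof (rule sum.cong[OF refl])
    fix w :: "bool list" assume "w \<in> {w. length w = L}"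
    then have "fst x \<le> length w" "fst y \<le> length w" using assms by auto
    then show "(\<Sum>b\<in>UNIV. cinner (expd A B x (w @ [b])) (expd A B y (w @ [b]))) = cinner (expd A B x w) (expd A B y w)"
      using pmod_inner[OF pm, of "expd A B x w" "expd A B y w"]
      by (simp add: expd_snoc UNIV_bool add.commute)
  qed
  finally show ?thesis unfolding SL_def .
qed

lemma SL_const:
  assumes pm: "pmodule A B" and "max (fst x) (fst y) \<le> L"
  shows "SL A B x y L = SL A B x y (max (fst x) (fst y))"
  using assms(2)
proof (induction L rule: dec_induct)
  case (step n) then show ?case using SL_Suc[OF pm, of x n y] by simp
qed simp

lemma pip_SL:
  assumes pm: "pmodule A B" and "max (fst x) (fst y) \<le> L"
  shows "pip A B x y = SL A B x y L"
  using SL_const[OF assms] by (simp add: pip_def SL_def Let_def)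

definition eqv :: "'n::finite cmat \<Rightarrow> 'n cmat \<Rightarrow> 'n elt \<Rightarrow> 'n elt \<Rightarrow> bool" where
  "eqv A B x y \<longleftrightarrow> (\<exists>n. \<forall>w. n \<le> length w \<longrightarrow> expd A B x w = expd A B y w)"

lemma eqv_pip:
  assumes pm: "pmodule A B" and e: "eqv A B x y"
  shows "pip A B x z = pip A B y z" "pip A B z x = pip A B z y"
proof -
  obtain n where n: "\<And>w. n \<le> length w \<Longrightarrow> expd A B x w = expd A B y w" using e unfolding eqv_def by blast
  define L where "L = max n (max (fst x) (max (fst y) (fst z)))"
  have "pip A B x z = SL A B x z L" by (rule pip_SL[OF pm]) (unfold L_def, linarith)
  also have "\<dots> = SL A B y z L" unfolding SL_def by (rule sum.cong) (auto simp: L_def n)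
  also have "\<dots> = pip A B y z" by (rule pip_SL[OF pm, symmetric]) (unfold L_def, linarith)
  finally show "pip A B x z = pip A B y z" .
  have "pip A B z x = SL A B z x L" by (rule pip_SL[OF pm]) (unfold L_def, linarith)
  also have "\<dots> = SL A B z y L" unfolding SL_def by (rule sum.cong) (auto simp: L_def n)
  also have "\<dots> = pip A B z y" by (rule pip_SL[OF pm, symmetric]) (unfold L_def, linarith)
  finally show "pip A B z x = pip A B z y" .
qed

lemma eqv_refine:
  assumes "fst x \<le> fst x'" "\<And>w. length w = fst x' \<Longrightarrow> snd x' w = expd A B x w"
  shows "eqv A B x' x"
  unfolding eqv_def
proof (intro exI allI impI)
  fix w :: "bool list" assume w: "fst x' \<le> length w"
  have "expd A B x' w = wact A B (drop (fst x') w) (expd A B x (take (fst x') w))"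
    unfolding expd_def[of A B x' w] using assms(2) w by simp
  also have "\<dots> = wact A B (drop (fst x) (take (fst x') w) @ drop (fst x') w) (snd x (take (fst x) w))"
    using assms(1) by (simp add: expd_def wact_append min_def)
  also have "drop (fst x) (take (fst x') w) @ drop (fst x') w = drop (fst x) w"
    using assms(1) w
    by (metis append_take_drop_id diff_le_self drop_drop drop_take le_add_diff_inverse2 take_drop)
  finally show "expd A B x' w = expd A B x w" by (simp add: expd_def)
qed

lemma eqv_same:
  assumes "fst x = fst y" "\<And>w. length w = fst x \<Longrightarrow> snd x w = snd y w"
  shows "eqv A B x y"
  using assms by (intro eqv_refine) (auto simp: expd_def)

lemma dsq_eqv:
  assumes pm: "pmodule A B" and "\<And>i. i \<in> I \<Longrightarrow> eqv A B (a i) (b i)"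
  shows "dsq (\<lambda>x y. \<Sum>i\<in>I. pip A B (x i) (y i)) a b = 0"
proof -
  have "(\<Sum>i\<in>I. pip A B (a i) (a i)) = (\<Sum>i\<in>I. pip A B (b i) (b i))"
   "(\<Sum>i\<in>I. pip A B (a i) (b i)) = (\<Sum>i\<in>I. pip A B (b i) (b i))"
   "(\<Sum>i\<in>I. pip A B (b i) (a i)) = (\<Sum>i\<in>I. pip A B (b i) (b i))"
    using eqv_pip[OF pm assms(2)] by (auto intro!: sum.cong)
  then show ?thesis unfolding dsq_def by simp
qed

lemma dsq_eqv2:
  assumes pm: "pmodule A B" and "\<And>i. i \<in> I \<Longrightarrow> eqv A B (a i) (b i)" "\<And>i. i \<in> I \<Longrightarrow> eqv A B (c i) (d i)"
  shows "dsq (\<lambda>x y. \<Sum>i\<in>I. pip A B (x i) (y i)) a c = dsq (\<lambda>x y. \<Sum>i\<in>I. pip A B (x i) (y i)) b d"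
proof -
  have "pip A B (a i) (c i) = pip A B (b i) (d i)" "pip A B (a i) (a i) = pip A B (b i) (b i)"
       "pip A B (c i) (a i) = pip A B (d i) (b i)" "pip A B (c i) (c i) = pip A B (d i) (d i)"
    if "i \<in> I" for i
    using eqv_pip[OF pm assms(2)[OF that]] eqv_pip[OF pm assms(3)[OF that]] by metis+
  then show ?thesis unfolding dsq_def by (simp cong: sum.cong)
qed




definition projd :: "'i set \<Rightarrow> ('i \<Rightarrow> 'n::finite cvec set) \<Rightarrow> 'n cvec set \<Rightarrow> 'i \<Rightarrow> 'n cvec \<Rightarrow> 'n cvec" where
  "projd I S K i v = (if v \<in> K then (SOME f. (\<forall>j\<in>I. f j \<in> S j) \<and> v = (\<Sum>j\<in>I. f j)) i else 0)"

locale dsum =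
  fixes A B :: "complex^'n::finite^'n" and K :: "'n cvec set" and I :: "'i set" and S :: "'i \<Rightarrow> 'n cvec set"
  assumes pm: "pmodule A B"
    and finI: "finite I"
    and subS: "\<And>i. i \<in> I \<Longrightarrow> vec.subspace (S i)"
    and invS: "\<And>i. i \<in> I \<Longrightarrow> invs A B (S i)"
    and orth: "\<And>i j x y. i \<in> I \<Longrightarrow> j \<in> I \<Longrightarrow> i \<noteq> j \<Longrightarrow> x \<in> S i \<Longrightarrow> y \<in> S j \<Longrightarrow> cinner x y = 0"
    and Kspan: "K = vec.span (\<Union>i\<in>I. S i)"
begin

abbreviation P where "P \<equiv> projd I S K"

lemma K_inv: "invs A B K"
  unfolding Kspan
proof (rule span_inv)
  fix x assume "x \<in> (\<Union>i\<in>I. S i)"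
  then obtain i where "i \<in> I" "x \<in> S i" by blast
  then show "A *v x \<in> vec.span (\<Union>i\<in>I. S i) \<and> B *v x \<in> vec.span (\<Union>i\<in>I. S i)"
    using invS[of i] by (auto simp: invs_def intro!: vec.span_base)
qed

lemma SK: "i \<in> I \<Longrightarrow> S i \<subseteq> K"
  unfolding Kspan using vec.span_superset by blast

lemma sumK: "(\<And>j. j \<in> I \<Longrightarrow> f j \<in> S j) \<Longrightarrow> (\<Sum>j\<in>I. f j) \<in> K"
  unfolding Kspan by (rule vec.span_sum) (auto intro: vec.span_base)

lemma dec_ex:
  assumes "v \<in> K" shows "\<exists>f. (\<forall>j\<in>I. f j \<in> S j) \<and> v = (\<Sum>j\<in>I. f j)"
  using assms unfolding Kspan
proof (induction rule: vec.span_induct_alt)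
  case base
  then show ?case using subS by (intro exI[of _ "\<lambda>_. 0"]) (auto simp: vec.subspace_0)
next
  case (step c x y)
  then obtain f where f: "\<forall>j\<in>I. f j \<in> S j" "y = (\<Sum>j\<in>I. f j)" by blast
  from step(1) obtain i where i: "i \<in> I" "x \<in> S i" by blast
  define g where "g j = (if j = i then c *s x + f j else f j)" for j
  have "\<forall>j\<in>I. g j \<in> S j" using f(1) i subS unfolding g_def
    by (auto intro: vec.subspace_add vec.subspace_scale)
  moreover have "c *s x + y = (\<Sum>j\<in>I. g j)"
  proof -
    have "(\<Sum>j\<in>I. g j) = (\<Sum>j\<in>I. (if j = i then c *s x else 0) + f j)"
      unfolding g_def by (rule sum.cong) auto
    also have "\<dots> = c *s x + y" using i(1) finI by (simp add: sum.distrib f(2))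
    finally show ?thesis by simp
  qed
  ultimately show ?case by blast
qed

lemma dec_uniq:
  assumes f: "\<forall>j\<in>I. f j \<in> S j" and g: "\<forall>j\<in>I. g j \<in> S j" and eq: "(\<Sum>j\<in>I. f j) = (\<Sum>j\<in>I. g j)"
    and i: "i \<in> I"
  shows "f i = g i"
proof -
  define h where "h j = f j - g j" for j
  have h: "\<forall>j\<in>I. h j \<in> S j" using f g subS unfolding h_def by (auto intro: vec.subspace_diff)
  have hs: "(\<Sum>j\<in>I. h j) = 0" using eq unfolding h_def by (simp add: sum_subtractf)
  have "0 = cinner (h i) (\<Sum>j\<in>I. h j)" using hs by simp
  also have "\<dots> = (\<Sum>j\<in>I. cinner (h i) (h j))" by (rule cinner_sum_right)
  also have "\<dots> = cinner (h i) (h i)"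
    using i finI h orth[of i] by (subst sum.remove[of _ i]) (auto intro!: sum.neutral, metis)
  finally have "h i = 0" using cinner_self_eq0 by metis
  then show ?thesis unfolding h_def by simp
qed

lemma P_spec:
  assumes "v \<in> K" shows "(\<forall>j\<in>I. P j v \<in> S j) \<and> v = (\<Sum>j\<in>I. P j v)"
proof -
  have "(\<forall>j\<in>I. (SOME f. (\<forall>j\<in>I. f j \<in> S j) \<and> v = (\<Sum>j\<in>I. f j)) j \<in> S j) \<and>
        v = (\<Sum>j\<in>I. (SOME f. (\<forall>j\<in>I. f j \<in> S j) \<and> v = (\<Sum>j\<in>I. f j)) j)"
    by (rule someI_ex[OF dec_ex[OF assms]])
  then show ?thesis using assms unfolding projd_def by simp
qed

lemma P_mem: "i \<in> I \<Longrightarrow> P i v \<in> S i"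
  using P_spec[of v] subS[of i] by (cases "v \<in> K") (auto simp: projd_def vec.subspace_0)

lemma P_eq:
  assumes "\<forall>j\<in>I. f j \<in> S j" "i \<in> I"
  shows "P i (\<Sum>j\<in>I. f j) = f i"
proof -
  have v: "(\<Sum>j\<in>I. f j) \<in> K" using sumK assms(1) by blast
  show ?thesis using dec_uniq[OF conjunct1[OF P_spec[OF v]] assms(1) _ assms(2)] P_spec[OF v] by metis
qed

lemma P_zero: "i \<in> I \<Longrightarrow> P i 0 = 0"
  using P_eq[of "\<lambda>_. 0" i] subS by (auto simp: vec.subspace_0)

lemma P_sel:
  assumes v: "v \<in> K" and i: "i \<in> I"
  shows "P i (sel A B b *v v) = sel A B b *v P i v"
proof -
  have "sel A B b *v v = sel A B b *v (\<Sum>j\<in>I. P j v)" using P_spec[OF v] by metis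
  also have "\<dots> = (\<Sum>j\<in>I. sel A B b *v P j v)" by (simp add: vec.sum)
  finally have e: "sel A B b *v v = (\<Sum>j\<in>I. sel A B b *v P j v)" .
  have "\<forall>j\<in>I. sel A B b *v P j v \<in> S j" using P_mem invS by (auto simp: invs_def)
  then show ?thesis unfolding e using P_eq[of "\<lambda>j. sel A B b *v P j v", OF _ i] by blast
qed

lemma P_wact: "v \<in> K \<Longrightarrow> i \<in> I \<Longrightarrow> P i (wact A B w v) = wact A B w (P i v)"
proof (induction w arbitrary: v)
  case (Cons b w)
  have "sel A B b *v v \<in> K" using K_inv Cons.prems by (auto simp: invs_def)
  then show ?case using Cons P_sel[OF Cons.prems, of b] by simp
qed simp

lemma P_inner:
  assumes a: "a \<in> K" and b: "b \<in> K"
  shows "(\<Sum>i\<in>I. cinner (P i a) (P i b)) = cinner a b"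
proof -
  have "cinner a b = cinner (\<Sum>i\<in>I. P i a) (\<Sum>j\<in>I. P j b)" using P_spec[OF a] P_spec[OF b] by metis
  also have "\<dots> = (\<Sum>i\<in>I. \<Sum>j\<in>I. cinner (P i a) (P j b))" unfolding cinner_sum_left cinner_sum_right by (rule sum.swap)
  also have "\<dots> = (\<Sum>i\<in>I. cinner (P i a) (P i b))"
  proof (rule sum.cong[OF refl])
    fix i assume i: "i \<in> I"
    show "(\<Sum>j\<in>I. cinner (P i a) (P j b)) = cinner (P i a) (P i b)"
      using i finI orth[OF i, of _ "P i a"] P_mem
      by (subst sum.remove[of _ i]) (auto intro!: sum.neutral)
  qed
  finally show ?thesis by simp
qed

definition Ux :: "'n elt \<Rightarrow> 'i \<Rightarrow> 'n elt" where
  "Ux x i = (fst x, \<lambda>w. P i (snd x w))"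

lemma expd_K: "x \<in> PiD K \<Longrightarrow> fst x \<le> length w \<Longrightarrow> expd A B x w \<in> K"
  unfolding expd_def PiD_def by (auto intro!: wact_inv[OF K_inv])

lemma expd_U: "x \<in> PiD K \<Longrightarrow> fst x \<le> length w \<Longrightarrow> i \<in> I \<Longrightarrow> P i (expd A B x w) = expd A B (Ux x i) w"
  unfolding expd_def Ux_def PiD_def by (auto intro!: P_wact)

lemma U_PiD: "i \<in> I \<Longrightarrow> Ux x i \<in> PiD (S i)"
  unfolding PiD_def Ux_def using P_mem by auto

lemma pip_U:
  assumes x: "x \<in> PiD K" and y: "y \<in> PiD K"
  shows "(\<Sum>i\<in>I. pip A B (Ux x i) (Ux y i)) = pip A B x y"
proof -
  let ?L = "max (fst x) (fst y)"
  have "(\<Sum>i\<in>I. pip A B (Ux x i) (Ux y i))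
      = (\<Sum>i\<in>I. \<Sum>w\<in>{w. length w = ?L}. cinner (P i (expd A B x w)) (P i (expd A B y w)))"
  proof (rule sum.cong[OF refl])
    fix i assume i: "i \<in> I"
    show "pip A B (Ux x i) (Ux y i) = (\<Sum>w\<in>{w. length w = ?L}. cinner (P i (expd A B x w)) (P i (expd A B y w)))"
      unfolding pip_def Let_def
      by (rule sum.cong) (auto simp: Ux_def expd_U[OF x _ i] expd_U[OF y _ i])
  qed
  also have "\<dots> = (\<Sum>w\<in>{w. length w = ?L}. \<Sum>i\<in>I. cinner (P i (expd A B x w)) (P i (expd A B y w)))"
    by (rule sum.swap)
  also have "\<dots> = pip A B x y"
    unfolding pip_def Let_def
    by (rule sum.cong) (auto intro!: P_inner expd_K x y)
  finally show ?thesis .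
qed

abbreviation ip2 where "ip2 \<equiv> (\<lambda>x y. \<Sum>i\<in>I. pip A B (x i) (y i))"

lemma dsq_U: "x \<in> PiD K \<Longrightarrow> y \<in> PiD K \<Longrightarrow> dsq ip2 (Ux x) (Ux y) = dsq (pip A B) x y"
  unfolding dsq_def by (simp add: pip_U)

end




lemma gact_len:
  assumes "length w = N' + depth t" "n \<le> N'"
  defines "j \<equiv> THE j. j < length (leaves t) \<and> take (length (leaves t ! j)) w = leaves t ! j"
  shows "n \<le> length (u @ take (N' - length u) (drop (length (leaves t ! j)) w))"
proof -
  have "length (leaves t ! j) \<le> depth t" using THE_leaf[of t w] assms(1) unfolding j_def by simp
  then have "N' \<le> length (drop (length (leaves t ! j)) w)" using assms(1) by simp
  then show ?thesis using assms(2) by simp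
qed

context dsum
begin

lemma key: "x \<in> PiD K \<Longrightarrow> i \<in> I \<Longrightarrow> fst x \<le> length b' \<Longrightarrow>
   P i (wact A B c (expd A B x b')) = wact A B c (expd A B (Ux x i) b')"
  by (simp add: P_wact expd_K expd_U)

lemma pop_U:
  assumes x: "x \<in> PiD K" and i: "i \<in> I"
  shows "eqv A B (Ux (pop A B \<gamma> x) i) (pop A B \<gamma> (Ux x i))"
proof (cases \<gamma>)
  case (CGen b)
  show ?thesis unfolding CGen pop_def
    by (rule eqv_same) (auto simp: sstar_def Ux_def P_zero[OF i])
next
  case (GElt s t \<kappa>)
  show ?thesis unfolding GElt pop_def gen.case
  proof (rule eqv_same)
    show "fst (Ux (gact A B s t \<kappa> x) i) = fst (gact A B s t \<kappa> (Ux x i))"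
      by (simp add: gact_def Let_def Ux_def)
    fix w :: "bool list"
    assume "length w = fst (Ux (gact A B s t \<kappa> x) i)"
    then have w: "length w = max (fst x) (depth s) + depth t" by (simp add: gact_def Let_def Ux_def)
    show "snd (Ux (gact A B s t \<kappa> x) i) w = snd (gact A B s t \<kappa> (Ux x i)) w"
      unfolding gact_def Let_def Ux_def snd_conv fst_conv
      by (rule key[OF x i, unfolded Ux_def], rule gact_len[OF w], simp)
  qed
qed

lemma expd_S: "y \<in> PiD (S j) \<Longrightarrow> j \<in> I \<Longrightarrow> fst y \<le> length w \<Longrightarrow> expd A B y w \<in> S j"
  unfolding expd_def PiD_def by (auto intro!: wact_inv[OF invS])

theorem dsum_equiv:
  "unit_equiv G (PiD K) (pip A B) (pop A B) {x. \<forall>i\<in>I. x i \<in> PiD (S i)} ip2 (\<lambda>\<gamma> x i. pop A B \<gamma> (x i))"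
  unfolding unit_equiv_def
proof (intro exI[of _ "\<lambda>X k. Ux (X k)"] conjI allI impI ballI)
  fix X assume X: "cauchy_in (PiD K) (pip A B) X"
  then have XK: "\<And>k. X k \<in> PiD K" by (simp add: cauchy_in_def)
  show "cauchy_in {x. \<forall>i\<in>I. x i \<in> PiD (S i)} ip2 (\<lambda>k. Ux (X k))"
    using X unfolding cauchy_in_def by (simp add: U_PiD dsq_U XK)
  fix g assume "g \<in> G"
  have "dsq ip2 (Ux (pop A B g (X k))) (\<lambda>i. pop A B g (Ux (X k) i)) = 0" for k
    by (rule dsq_eqv[OF pm]) (rule pop_U[OF XK])
  then show "ceq ip2 (\<lambda>k. Ux (pop A B g (X k))) (\<lambda>k i. pop A B g (Ux (X k) i))"
    unfolding ceq_def by simp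
next
  fix X Y assume X: "cauchy_in (PiD K) (pip A B) X" and Y: "cauchy_in (PiD K) (pip A B) Y"
  then have "\<And>k. X k \<in> PiD K" "\<And>k. Y k \<in> PiD K" by (auto simp: cauchy_in_def)
  then show "cip ip2 (\<lambda>k. Ux (X k)) (\<lambda>k. Ux (Y k)) = cip (pip A B) X Y"
    unfolding cip_def by (simp add: pip_U)
next
  fix Y assume Y: "cauchy_in {x. \<forall>i\<in>I. x i \<in> PiD (S i)} ip2 Y"
  then have YS: "\<And>k i. i \<in> I \<Longrightarrow> Y k i \<in> PiD (S i)" by (simp add: cauchy_in_def)
  define N where "N k = (\<Sum>j\<in>I. fst (Y k j))" for k
  define X where "X k = (N k, \<lambda>w. \<Sum>j\<in>I. expd A B (Y k j) w)" for k
  have Nge: "fst (Y k j) \<le> N k" if "j \<in> I" for k j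
    unfolding N_def using finI that by (intro member_le_sum) auto
  have exS: "\<forall>j\<in>I. expd A B (Y k j) w \<in> S j" if "length w = N k" for k w
    using expd_S[OF YS] Nge that by auto
  have XK: "X k \<in> PiD K" for k
    unfolding PiD_def X_def using exS sumK by auto
  have ref: "eqv A B (Ux (X k) i) (Y k i)" if i: "i \<in> I" for k i
  proof (rule eqv_refine)
    show "fst (Y k i) \<le> fst (Ux (X k) i)" using Nge[OF i] by (simp add: Ux_def X_def)
    fix w :: "bool list" assume "length w = fst (Ux (X k) i)"
    then have "length w = N k" by (simp add: Ux_def X_def)
    then show "snd (Ux (X k) i) w = expd A B (Y k i) w"
      unfolding Ux_def X_def using P_eq[OF exS i] by simp
  qed
  have "cauchy_in (PiD K) (pip A B) X"
    unfolding cauchy_in_def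
  proof (intro conjI allI impI)
    fix k show "X k \<in> PiD K" by (rule XK)
  next
    fix e :: real assume "e > 0"
    then obtain M where M: "\<forall>m\<ge>M. \<forall>n\<ge>M. cmod (dsq ip2 (Y m) (Y n)) < e"
      using Y unfolding cauchy_in_def by blast
    have "dsq (pip A B) (X m) (X n) = dsq ip2 (Y m) (Y n)" for m n
      using dsq_U[OF XK XK, symmetric] dsq_eqv2[OF pm ref ref] by simp
    then show "\<exists>M. \<forall>m\<ge>M. \<forall>n\<ge>M. cmod (dsq (pip A B) (X m) (X n)) < e" using M by auto
  qed
  moreover have "ceq ip2 (\<lambda>k. Ux (X k)) Y"
  proof -
    have "dsq ip2 (Ux (X k)) (Y k) = 0" for k by (rule dsq_eqv[OF pm ref])
    then show ?thesis unfolding ceq_def by simp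
  qed
  ultimately show "\<exists>Xa. cauchy_in (PiD K) (pip A B) Xa \<and> ceq ip2 (\<lambda>k. Ux (Xa k)) Y" by blast
qed

end



theorem proposition2p16:
  fixes A B :: "complex^'n::finite^'n" and X :: kind
  assumes "pmodule A B"
  shows "orth_dsum (Hatom A B) (atom_classes A B) (Hatom_class A B) \<and>
         Pi_equiv_sum A B X (Hatom A B) (atom_classes A B) (Hatom_class A B)"
proof
  show "orth_dsum (Hatom A B) (atom_classes A B) (Hatom_class A B)" by (rule part1[OF assms])
  interpret d: dsum A B "Hatom A B" "atom_classes A B" "Hatom_class A B"
  proof
    show "pmodule A B" by (rule assms)
    show "finite (atom_classes A B)" by (rule finite_atom_classes)
    show "vec.subspace (Hatom_class A B i)" for i
      unfolding Hatom_class_def Hatom_ray_def by (rule vec.subspace_span)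
    show "invs A B (Hatom_class A B i)" for i
      unfolding Hatom_class_def by (rule Hatom_ray_inv[OF assms])
    show "cinner x y = 0" if "i \<in> atom_classes A B" "j \<in> atom_classes A B" "i \<noteq> j"
      "x \<in> Hatom_class A B i" "y \<in> Hatom_class A B j" for i j x y
      using Hatom_class_orth[OF assms that] .
    show "Hatom A B = vec.span (\<Union>i\<in>atom_classes A B. Hatom_class A B i)"
      by (rule Hatom_span[OF assms])
  qed
  show "Pi_equiv_sum A B X (Hatom A B) (atom_classes A B) (Hatom_class A B)"
    unfolding Pi_equiv_sum_def by (rule d.dsum_equiv)
qed

end
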